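(* Let $P$ be a finite poset. Then $P$ is a forest with duplications if and only if every vertex of the graph $\Gamma(P)$ has degree at most one, i.e. $\Gamma(P)$ is a disjoint union of isolated edges and isolated vertices.
   Context: A (lower) order ideal of $P$ is a subset $J$ with $y\in J$, $x\preceq y$ implying $x\in J$; it is a connected order ideal if it is nonempty and its Hasse diagram is connected. Two order ideals $J_1,J_2$ intersect non-trivially if $J_1\cap J_2\neq\emptyset$ and neither of $J_1,J_2$ contains the other. The graph $\Gamma(P)$ has as vertex set the connected order ideals of $P$, with an edge between two of them exactly when they intersect non-trivially. Forests with duplications are the finite posets obtainable from one-element posets by repeated application of the following operations: (i) Disjoint union: for posets $P,Q$, take the disjoint union of the sets and of the relations, giving $P\oplus Q$. (ii) Hanging: for posets $P,Q$ and an element $a\in P$, on the disjoint union of $P$ and $Q$ add the relations $q\prec a$ for every $q\in Q$ and close transitively, giving $P\,^aQ$. (iii) Duplication: given a poset of the form $P=Q_1\,^a\,Q_2$ (obtained by hanging $Q_2$ below $a\in Q_1$) where $a$ is a minimal element of $Q_1$, add a new element $a'$ with relations $q\preceq a'$ for all $q\in Q_2$ and $a'\preceq q$ for all $q\in Q_1$ with $q\succ a$ (closed transitively), giving $P^{(a)}$. *)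

theory Defs
  imports Main
begin

text \<open>A finite poset is represented by a carrier set A together with a relation R
  (the non-strict order); only the values of R on A are relevant.\<close>

definition is_poset :: "'a set \<Rightarrow> ('a \<Rightarrow> 'a \<Rightarrow> bool) \<Rightarrow> bool" where
  "is_poset A R \<longleftrightarrow>
     (\<forall>x\<in>A. R x x) \<and>
     (\<forall>x\<in>A. \<forall>y\<in>A. R x y \<and> R y x \<longrightarrow> x = y) \<and>
     (\<forall>x\<in>A. \<forall>y\<in>A. \<forall>z\<in>A. R x y \<and> R y z \<longrightarrow> R x z)"

definition order_ideal :: "'a set \<Rightarrow> ('a \<Rightarrow> 'a \<Rightarrow> bool) \<Rightarrow> 'a set \<Rightarrow> bool" where
  "order_ideal A R J \<longleftrightarrow> J \<subseteq> A \<and> (\<forall>y\<in>J. \<forall>x\<in>A. R x y \<longrightarrow> x \<in> J)"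

definition covers :: "'a set \<Rightarrow> ('a \<Rightarrow> 'a \<Rightarrow> bool) \<Rightarrow> 'a \<Rightarrow> 'a \<Rightarrow> bool" where
  "covers J R x y \<longleftrightarrow> x \<in> J \<and> y \<in> J \<and> x \<noteq> y \<and> R x y \<and>
     \<not> (\<exists>z\<in>J. z \<noteq> x \<and> z \<noteq> y \<and> R x z \<and> R z y)"

definition hasse_edges :: "'a set \<Rightarrow> ('a \<Rightarrow> 'a \<Rightarrow> bool) \<Rightarrow> ('a \<times> 'a) set" where
  "hasse_edges J R = {(x, y). covers J R x y \<or> covers J R y x}"

definition connected_order_ideal :: "'a set \<Rightarrow> ('a \<Rightarrow> 'a \<Rightarrow> bool) \<Rightarrow> 'a set \<Rightarrow> bool" where
  "connected_order_ideal A R J \<longleftrightarrow> order_ideal A R J \<and> J \<noteq> {} \<and>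
     (\<forall>x\<in>J. \<forall>y\<in>J. (x, y) \<in> (hasse_edges J R)\<^sup>*)"

definition intersect_nontrivially :: "'a set \<Rightarrow> 'a set \<Rightarrow> bool" where
  "intersect_nontrivially J1 J2 \<longleftrightarrow> J1 \<inter> J2 \<noteq> {} \<and> \<not> J1 \<subseteq> J2 \<and> \<not> J2 \<subseteq> J1"

definition gamma_degree :: "'a set \<Rightarrow> ('a \<Rightarrow> 'a \<Rightarrow> bool) \<Rightarrow> 'a set \<Rightarrow> nat" where
  "gamma_degree A R J = card {J'. connected_order_ideal A R J' \<and> intersect_nontrivially J J'}"

definition disj_union_rel ::
  "'a set \<Rightarrow> ('a \<Rightarrow> 'a \<Rightarrow> bool) \<Rightarrow> 'a set \<Rightarrow> ('a \<Rightarrow> 'a \<Rightarrow> bool) \<Rightarrow> 'a \<Rightarrow> 'a \<Rightarrow> bool" where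
  "disj_union_rel A R B S x y \<longleftrightarrow> (x \<in> A \<and> y \<in> A \<and> R x y) \<or> (x \<in> B \<and> y \<in> B \<and> S x y)"

text \<open>Hanging (B,S) below a \<in> A (already transitively closed).\<close>
definition hang_rel ::
  "'a set \<Rightarrow> ('a \<Rightarrow> 'a \<Rightarrow> bool) \<Rightarrow> 'a \<Rightarrow> 'a set \<Rightarrow> ('a \<Rightarrow> 'a \<Rightarrow> bool) \<Rightarrow> 'a \<Rightarrow> 'a \<Rightarrow> bool" where
  "hang_rel A R a B S x y \<longleftrightarrow> disj_union_rel A R B S x y \<or> (x \<in> B \<and> y \<in> A \<and> R a y)"

text \<open>Duplication of a in (A,R) hung with (B,S) below a, new element a' (transitively closed).\<close>
definition dup_rel ::
  "'a set \<Rightarrow> ('a \<Rightarrow> 'a \<Rightarrow> bool) \<Rightarrow> 'a \<Rightarrow> 'a set \<Rightarrow> ('a \<Rightarrow> 'a \<Rightarrow> bool) \<Rightarrow> 'a \<Rightarrow> 'a \<Rightarrow> 'a \<Rightarrow> bool" where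
  "dup_rel A R a B S a' x y \<longleftrightarrow> hang_rel A R a B S x y \<or> (x = a' \<and> y = a') \<or>
     (x \<in> B \<and> y = a') \<or> (x = a' \<and> y \<in> A \<and> y \<noteq> a \<and> R a y)"

inductive forest_dup :: "'a set \<Rightarrow> ('a \<Rightarrow> 'a \<Rightarrow> bool) \<Rightarrow> bool" where
  single: "forest_dup {x} (\<lambda>u v. u = v)"
| iso: "forest_dup A R \<Longrightarrow> bij_betw f A B \<Longrightarrow>
        (\<forall>x\<in>A. \<forall>y\<in>A. R x y \<longleftrightarrow> S (f x) (f y)) \<Longrightarrow> forest_dup B S"
| union: "forest_dup A R \<Longrightarrow> forest_dup B S \<Longrightarrow> A \<inter> B = {} \<Longrightarrow>
        forest_dup (A \<union> B) (disj_union_rel A R B S)"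
| hang: "forest_dup A R \<Longrightarrow> forest_dup B S \<Longrightarrow> A \<inter> B = {} \<Longrightarrow> a \<in> A \<Longrightarrow>
        forest_dup (A \<union> B) (hang_rel A R a B S)"
| dup: "forest_dup A R \<Longrightarrow> forest_dup B S \<Longrightarrow> A \<inter> B = {} \<Longrightarrow> a \<in> A \<Longrightarrow>
        (\<forall>y\<in>A. R y a \<longrightarrow> y = a) \<Longrightarrow> a' \<notin> A \<Longrightarrow> a' \<notin> B \<Longrightarrow>
        forest_dup (insert a' (A \<union> B)) (dup_rel A R a B S a')"

end

theory Submission imports Defs begin

definition partner :: "'a set \<Rightarrow> ('a \<Rightarrow> 'a \<Rightarrow> bool) \<Rightarrow> 'a \<Rightarrow> 'a \<Rightarrow> bool" where
  "partner A R x y \<longleftrightarrow> \<not> R x y \<and> \<not> R y x \<and> (\<exists>z\<in>A. R z x \<and> R z y)"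

definition matching :: "'a set \<Rightarrow> ('a \<Rightarrow> 'a \<Rightarrow> bool) \<Rightarrow> bool" where
  "matching A R \<longleftrightarrow> (\<forall>x\<in>A. \<forall>y\<in>A. \<forall>y'\<in>A. partner A R x y \<and> partner A R x y' \<longrightarrow> y = y')"

lemma matchingD: "matching A R \<Longrightarrow> x \<in> A \<Longrightarrow> y \<in> A \<Longrightarrow> y' \<in> A \<Longrightarrow>
  partner A R x y \<Longrightarrow> partner A R x y' \<Longrightarrow> y = y'"
  unfolding matching_def by blast

lemma partner_sym: "partner A R x y \<Longrightarrow> partner A R y x"
  unfolding partner_def by blast

definition sdn :: "'a set \<Rightarrow> ('a \<Rightarrow> 'a \<Rightarrow> bool) \<Rightarrow> 'a \<Rightarrow> 'a set" where
  "sdn A R x = {y\<in>A. R y x \<and> y \<noteq> x}"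

definition sup_set :: "'a set \<Rightarrow> ('a \<Rightarrow> 'a \<Rightarrow> bool) \<Rightarrow> 'a \<Rightarrow> 'a set" where
  "sup_set A R x = {y\<in>A. R x y \<and> y \<noteq> x}"

lemma poset_sub: "is_poset A R \<Longrightarrow> S \<subseteq> A \<Longrightarrow> is_poset S R"
  unfolding is_poset_def by blast

lemma matching_sub: "matching A R \<Longrightarrow> S \<subseteq> A \<Longrightarrow> matching S R"
  unfolding matching_def partner_def by blast

lemma poset_refl: "is_poset A R \<Longrightarrow> x \<in> A \<Longrightarrow> R x x"
  unfolding is_poset_def by blast
lemma poset_antisym: "is_poset A R \<Longrightarrow> x \<in> A \<Longrightarrow> y \<in> A \<Longrightarrow> R x y \<Longrightarrow> R y x \<Longrightarrow> x = y"
  unfolding is_poset_def by blast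
lemma poset_trans: "is_poset A R \<Longrightarrow> x \<in> A \<Longrightarrow> y \<in> A \<Longrightarrow> z \<in> A \<Longrightarrow> R x y \<Longrightarrow> R y z \<Longrightarrow> R x z"
  unfolding is_poset_def by blast

lemma ex_min:
  assumes "finite S" "is_poset A R" "S \<subseteq> A" "x \<in> S"
  shows "\<exists>m\<in>S. R m x \<and> (\<forall>y\<in>S. R y m \<longrightarrow> y = m)"
proof -
  let ?P = "\<lambda>m. m \<in> S \<and> R m x"
  let ?f = "\<lambda>m. card {y\<in>S. R y m}"
  have "?P x" using assms(2-4) poset_refl[of A R x] by blast
  from ex_has_least_nat[of ?P x ?f, OF this] obtain m where m: "?P m" "\<forall>y. ?P y \<longrightarrow> ?f m \<le> ?f y"
    by blast
  have mA: "m \<in> A" "x \<in> A" using m(1) assms(3,4) by auto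
  have "\<forall>y\<in>S. R y m \<longrightarrow> y = m"
  proof (intro ballI impI)
    fix y assume y: "y \<in> S" "R y m"
    have yA: "y \<in> A" using y assms(3) by auto
    show "y = m"
    proof (rule ccontr)
      assume ne: "y \<noteq> m"
      have "{w\<in>S. R w y} \<subseteq> {w\<in>S. R w m}"
      proof
        fix w assume "w \<in> {w\<in>S. R w y}"
        then have "w \<in> S" "R w y" by auto
        then show "w \<in> {w\<in>S. R w m}" using poset_trans[OF assms(2) _ yA mA(1), of w] y assms(3) by auto
      qed
      moreover have "m \<notin> {w\<in>S. R w y}"
        using poset_antisym[OF assms(2) mA(1) yA] y ne by auto
      moreover have "m \<in> {w\<in>S. R w m}" using m(1) poset_refl[OF assms(2) mA(1)] by blast
      ultimately have "{w\<in>S. R w y} \<subset> {w\<in>S. R w m}" by blast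
      then have "?f y < ?f m" using assms(1) by (intro psubset_card_mono) auto
      moreover have "?P y" using y m(1) poset_trans[OF assms(2) yA mA] by blast
      ultimately show False using m(2) by force
    qed
  qed
  then show ?thesis using m(1) by blast
qed
lemma fd_cong: "forest_dup A R' \<Longrightarrow> (\<forall>x\<in>A. \<forall>y\<in>A. R' x y \<longleftrightarrow> R x y) \<Longrightarrow> forest_dup A R"
  using forest_dup.iso[of A R' id A R] by simp

lemma no_least_partner:
  assumes "finite A" "is_poset A R" "w \<in> A" "p1 \<in> sup_set A R w"
    "\<forall>y\<in>sup_set A R w. R y p1 \<longrightarrow> y = p1"
    "\<not> (\<exists>a\<in>sup_set A R w. \<forall>y\<in>sup_set A R w. R a y)"
  shows "\<exists>p2\<in>sup_set A R w. partner A R p1 p2"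
proof -
  obtain y where y: "y \<in> sup_set A R w" "\<not> R p1 y" using assms(4,6) by blast
  have fin: "finite (sup_set A R w)" using assms(1) unfolding sup_set_def by simp
  have sub: "sup_set A R w \<subseteq> A" unfolding sup_set_def by blast
  obtain p2 where p2: "p2 \<in> sup_set A R w" "R p2 y"
    using ex_min[OF fin assms(2) sub y(1)] by blast
  have A: "p1 \<in> A" "p2 \<in> A" "y \<in> A" using sub p2 y assms(4) by blast+
  have "\<not> R p1 p2" using p2 y poset_trans[OF assms(2) A(1) A(2) A(3)] by blast
  moreover have "\<not> R p2 p1" using assms(5) p2 y by blast
  moreover have "R w p1" "R w p2" using assms(4) p2 unfolding sup_set_def by auto
  ultimately show ?thesis using p2(1) assms(3) unfolding partner_def by blast
qed

lemma T1_lemma: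
  assumes fin: "finite A" and po: "is_poset A R" and mt: "matching A R"
    and caseB: "\<forall>z\<in>A. (\<forall>y\<in>A. R y z \<longrightarrow> y = z) \<longrightarrow>
        \<not> (\<exists>a\<in>sup_set A R z. \<forall>y\<in>sup_set A R z. R a y)"
    and a: "a1 \<in> A" "a2 \<in> A" "partner A R a1 a2"
    and mini: "\<forall>b1\<in>A. \<forall>b2\<in>A. partner A R b1 b2 \<longrightarrow>
        card (sdn A R a1 \<union> sdn A R a2) \<le> card (sdn A R b1 \<union> sdn A R b2)"
  shows "sdn A R a1 \<subseteq> sdn A R a2"
proof
  fix x assume x1: "x \<in> sdn A R a1"
  show "x \<in> sdn A R a2"
  proof (rule ccontr)
    assume x2: "x \<notin> sdn A R a2"
    have xA: "x \<in> A" "R x a1" "x \<noteq> a1" using x1 unfolding sdn_def by auto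
    obtain w where w: "w \<in> A" "R w x" "\<forall>y\<in>A. R y w \<longrightarrow> y = w"
      using ex_min[OF fin po _ xA(1)] by blast
    have "R w a1" using poset_trans[OF po w(1) xA(1) a(1)] w(2) xA(2) by blast
    moreover have "w \<noteq> a1" using poset_antisym[OF po xA(1) a(1)] w(2) xA by blast
    ultimately have a1U: "a1 \<in> sup_set A R w" using a unfolding sup_set_def by blast
    have finU: "finite (sup_set A R w)" using fin unfolding sup_set_def by simp
    have subU: "sup_set A R w \<subseteq> A" unfolding sup_set_def by blast
    obtain p1 where p1: "p1 \<in> sup_set A R w" "R p1 a1" "\<forall>y\<in>sup_set A R w. R y p1 \<longrightarrow> y = p1"
      using ex_min[OF finU po subU a1U] by blast
    obtain p2 where p2: "p2 \<in> sup_set A R w" "partner A R p1 p2"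
      using no_least_partner[OF fin po w(1) p1(1) p1(3)] caseB w by blast
    have pA: "p1 \<in> A" "p2 \<in> A" using p1 p2 subU by blast+
    have Rwp: "R w p1" "R w p2" using p1 p2 unfolding sup_set_def by auto
    have "R p2 a1"
    proof (rule ccontr)
      assume n: "\<not> R p2 a1"
      have "\<not> R a1 p2" using poset_trans[OF po pA(1) a(1) pA(2)] p1(2) p2(2) unfolding partner_def by blast
      then have "partner A R a1 p2" using n w(1) Rwp \<open>R w a1\<close> unfolding partner_def by blast
      then have "p2 = a2" using matchingD[OF mt a(1) pA(2) a(2)] a(3) by blast
      then have "R w a2" using Rwp by simp
      have "\<not> R x a2"
      proof
        assume "R x a2"
        show False
        proof (cases "x = a2")
          case True then show False using xA a unfolding partner_def by blast
        next
          case False then show False using x2 \<open>R x a2\<close> xA unfolding sdn_def by blast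
        qed
      qed
      moreover have "\<not> R a2 x" using poset_trans[OF po a(2) xA(1) a(1)] xA(2) a(3) unfolding partner_def by blast
      ultimately have "partner A R a2 x" using w \<open>R w a2\<close> unfolding partner_def by blast
      moreover have "partner A R a2 a1" using partner_sym[OF a(3)] by blast
      ultimately have "x = a1" using matchingD[OF mt a(2) xA(1) a(1)] by blast
      then show False using xA by simp
    qed
    have np: "\<not> R p1 p2" "\<not> R p2 p1" using p2 unfolding partner_def by auto
    have "p1 \<noteq> a1" using \<open>R p2 a1\<close> np by blast
    have "p2 \<noteq> a1" using p1(2) np by blast
    have sub: "sdn A R p \<subseteq> sdn A R a1" if "p \<in> A" "R p a1" "p \<noteq> a1" for p
    proof
      fix y assume "y \<in> sdn A R p"
      then have y: "y \<in> A" "R y p" "y \<noteq> p" unfolding sdn_def by auto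
      have "R y a1" using poset_trans[OF po y(1) that(1) a(1)] y that by blast
      moreover have "y \<noteq> a1" using poset_antisym[OF po that(1) a(1)] y that by blast
      ultimately show "y \<in> sdn A R a1" using y unfolding sdn_def by blast
    qed
    have s1: "sdn A R p1 \<subseteq> sdn A R a1" using sub pA p1(2) \<open>p1 \<noteq> a1\<close> by blast
    have s2: "sdn A R p2 \<subseteq> sdn A R a1" using sub pA \<open>R p2 a1\<close> \<open>p2 \<noteq> a1\<close> by blast
    have "p1 \<in> sdn A R a1" "p1 \<notin> sdn A R p1" "p1 \<notin> sdn A R p2"
      using p1(2) pA \<open>p1 \<noteq> a1\<close> np unfolding sdn_def by auto
    then have "sdn A R p1 \<union> sdn A R p2 \<subset> sdn A R a1 \<union> sdn A R a2" using s1 s2 by blast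
    then have "card (sdn A R p1 \<union> sdn A R p2) < card (sdn A R a1 \<union> sdn A R a2)"
      using fin by (intro psubset_card_mono) (auto simp: sdn_def)
    moreover have "card (sdn A R a1 \<union> sdn A R a2) \<le> card (sdn A R p1 \<union> sdn A R p2)" using mini pA p2(2) by blast
    ultimately show False by linarith
  qed
qed

lemma T2_lemma:
  assumes po: "is_poset A R" and mt: "matching A R" and a: "a1 \<in> A" "a2 \<in> A" "partner A R a1 a2"
    and y: "y \<in> A" "R a1 y" "y \<noteq> a1"
  shows "R a2 y"
proof (rule ccontr)
  assume n: "\<not> R a2 y"
  obtain z where z: "z \<in> A" "R z a1" "R z a2" using a unfolding partner_def by blast
  have "\<not> R y a2" using poset_trans[OF po a(1) y(1) a(2)] a(3) y unfolding partner_def by blast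
  moreover have "R z y" using poset_trans[OF po z(1) a(1) y(1)] z y by blast
  ultimately have "partner A R a2 y" using n z unfolding partner_def by blast
  moreover have "partner A R a2 a1" using partner_sym[OF a(3)] by blast
  ultimately show False using matchingD[OF mt a(2) y(1) a(1)] y(3) by blast
qed

lemma T3_lemma:
  assumes po: "is_poset A R" and mt: "matching A R" and a: "a1 \<in> A" "a2 \<in> A" "partner A R a1 a2"
    and q: "q \<in> sdn A R a1" and y: "y \<in> A" "R q y" "y \<notin> sdn A R a1" "y \<noteq> a2"
  shows "R a1 y"
proof (rule ccontr)
  assume n: "\<not> R a1 y"
  have "y \<noteq> a1" using n poset_refl[OF po a(1)] by blast
  then have "\<not> R y a1" using y unfolding sdn_def by blast
  moreover have "R q a1" "q \<in> A" using q unfolding sdn_def by auto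
  ultimately have "partner A R a1 y" using n y unfolding partner_def by blast
  then show False using matchingD[OF mt a(1) y(1) a(2)] a(3) y(4) by blast
qed


definition dn :: "'a set \<Rightarrow> ('a \<Rightarrow> 'a \<Rightarrow> bool) \<Rightarrow> 'a \<Rightarrow> 'a set" where
  "dn A R x = {y\<in>A. R y x}"

lemma hasse_path:
  assumes fin: "finite J" and po: "is_poset A R" and JA: "J \<subseteq> A"
  shows "u \<in> J \<Longrightarrow> v \<in> J \<Longrightarrow> R u v \<Longrightarrow> (u, v) \<in> (hasse_edges J R)\<^sup>*"
proof (induction "card {z\<in>J. R u z \<and> R z v}" arbitrary: u v rule: less_induct)
  case less
  have uA: "u \<in> A" "v \<in> A" using less.prems JA by auto
  show ?case
  proof (cases "u = v")
    case True then show ?thesis by simp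
  next
    case uv: False
    show ?thesis
    proof (cases "covers J R u v")
      case True
      then have "(u, v) \<in> hasse_edges J R" unfolding hasse_edges_def by simp
      then show ?thesis by simp
    next
      case False
      then obtain z where z: "z \<in> J" "z \<noteq> u" "z \<noteq> v" "R u z" "R z v"
        using less.prems uv unfolding covers_def by blast
      have zA: "z \<in> A" using z JA by auto
      have sub1: "{w\<in>J. R u w \<and> R w z} \<subset> {w\<in>J. R u w \<and> R w v}"
      proof
        show "{w\<in>J. R u w \<and> R w z} \<subseteq> {w\<in>J. R u w \<and> R w v}"
        proof
          fix w assume "w \<in> {w\<in>J. R u w \<and> R w z}"
          then have w: "w \<in> J" "R u w" "R w z" by auto
          then have "R w v" using poset_trans[OF po _ zA uA(2), of w] JA z by blast
          then show "w \<in> {w\<in>J. R u w \<and> R w v}" using w by blast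
        qed
        have "v \<notin> {w\<in>J. R u w \<and> R w z}" using poset_antisym[OF po zA uA(2)] z by blast
        moreover have "v \<in> {w\<in>J. R u w \<and> R w v}" using less.prems poset_refl[OF po uA(2)] by blast
        ultimately show "{w\<in>J. R u w \<and> R w z} \<noteq> {w\<in>J. R u w \<and> R w v}" by blast
      qed
      have sub2: "{w\<in>J. R z w \<and> R w v} \<subset> {w\<in>J. R u w \<and> R w v}"
      proof
        show "{w\<in>J. R z w \<and> R w v} \<subseteq> {w\<in>J. R u w \<and> R w v}"
        proof
          fix w assume "w \<in> {w\<in>J. R z w \<and> R w v}"
          then have w: "w \<in> J" "R z w" "R w v" by auto
          then have "R u w" using poset_trans[OF po uA(1) zA, of w] JA z by blast
          then show "w \<in> {w\<in>J. R u w \<and> R w v}" using w by blast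
        qed
        have "u \<notin> {w\<in>J. R z w \<and> R w v}" using poset_antisym[OF po zA uA(1)] z by blast
        moreover have "u \<in> {w\<in>J. R u w \<and> R w v}" using less.prems poset_refl[OF po uA(1)] by blast
        ultimately show "{w\<in>J. R z w \<and> R w v} \<noteq> {w\<in>J. R u w \<and> R w v}" by blast
      qed
      have c1: "card {w\<in>J. R u w \<and> R w z} < card {w\<in>J. R u w \<and> R w v}"
        using psubset_card_mono[OF _ sub1] fin by simp
      have c2: "card {w\<in>J. R z w \<and> R w v} < card {w\<in>J. R u w \<and> R w v}"
        using psubset_card_mono[OF _ sub2] fin by simp
      have "(u, z) \<in> (hasse_edges J R)\<^sup>*" using less.hyps[OF c1] less.prems z by blast
      moreover have "(z, v) \<in> (hasse_edges J R)\<^sup>*" using less.hyps[OF c2] less.prems z by blast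
      ultimately show ?thesis by (rule rtrancl_trans)
    qed
  qed
qed

lemma hasse_sym: "(hasse_edges J R)\<inverse> = hasse_edges J R"
  unfolding hasse_edges_def by auto

lemma conn_dn:
  assumes fin: "finite A" and po: "is_poset A R" and x: "x \<in> A"
  shows "connected_order_ideal A R (dn A R x)"
proof -
  let ?J = "dn A R x"
  have JA: "?J \<subseteq> A" unfolding dn_def by blast
  have finJ: "finite ?J" using fin JA finite_subset by blast
  have oi: "order_ideal A R ?J"
    unfolding order_ideal_def
  proof (intro conjI JA ballI impI)
    fix y z assume "y \<in> ?J" "z \<in> A" "R z y"
    then show "z \<in> ?J" using poset_trans[OF po \<open>z \<in> A\<close> _ x, of y] unfolding dn_def by blast
  qed
  have xJ: "x \<in> ?J" using x poset_refl[OF po x] unfolding dn_def by blast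
  have tox: "(u, x) \<in> (hasse_edges ?J R)\<^sup>*" if "u \<in> ?J" for u
    using hasse_path[OF finJ po JA that xJ] that unfolding dn_def by blast
  have "(u, v) \<in> (hasse_edges ?J R)\<^sup>*" if "u \<in> ?J" "v \<in> ?J" for u v
  proof -
    have "(v, x) \<in> (hasse_edges ?J R)\<^sup>*" using tox that by blast
    then have "(x, v) \<in> ((hasse_edges ?J R)\<^sup>*)\<inverse>" by simp
    then have "(x, v) \<in> (hasse_edges ?J R)\<^sup>*" by (simp add: rtrancl_converse[symmetric] hasse_sym)
    then show ?thesis using rtrancl_trans[OF tox[OF that(1)]] by blast
  qed
  then show ?thesis using oi xJ unfolding connected_order_ideal_def by blast
qed

lemma deg_matching:
  assumes fin: "finite A" and po: "is_poset A R"
    and deg: "\<forall>J. connected_order_ideal A R J \<longrightarrow> gamma_degree A R J \<le> 1"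
  shows "matching A R"
  unfolding matching_def
proof (intro ballI impI)
  fix x y y' assume A: "x \<in> A" "y \<in> A" "y' \<in> A" and p: "partner A R x y \<and> partner A R x y'"
  show "y = y'"
  proof (rule ccontr)
    assume ne: "y \<noteq> y'"
    let ?N = "{J'. connected_order_ideal A R J' \<and> intersect_nontrivially (dn A R x) J'}"
    have nt: "intersect_nontrivially (dn A R x) (dn A R u)" if uu: "u \<in> A" "partner A R x u" for u
    proof -
      obtain z where z: "z \<in> A" "R z x" "R z u" using uu unfolding partner_def by blast
      have "x \<in> dn A R x" "x \<notin> dn A R u" "u \<in> dn A R u" "u \<notin> dn A R x"
        using uu A poset_refl[OF po A(1)] poset_refl[OF po uu(1)] unfolding dn_def partner_def by auto
      moreover have "z \<in> dn A R x \<inter> dn A R u" using z unfolding dn_def by blast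
      ultimately show ?thesis unfolding intersect_nontrivially_def by blast
    qed
    have in1: "dn A R y \<in> ?N" using nt[OF A(2)] p conn_dn[OF fin po A(2)] by blast
    have in2: "dn A R y' \<in> ?N" using nt[OF A(3)] p conn_dn[OF fin po A(3)] by blast
    have "dn A R y \<noteq> dn A R y'"
    proof
      assume eq: "dn A R y = dn A R y'"
      have "y \<in> dn A R y" "y' \<in> dn A R y'" using A poset_refl[OF po A(2)] poset_refl[OF po A(3)]
        unfolding dn_def by auto
      then have "R y y'" "R y' y" using eq unfolding dn_def by auto
      then show False using poset_antisym[OF po A(2) A(3)] ne by blast
    qed
    moreover have finN: "finite ?N"
    proof (rule finite_subset[of _ "Pow A"])
      show "?N \<subseteq> Pow A" unfolding connected_order_ideal_def order_ideal_def by blast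
    qed (use fin in simp)
    ultimately have "\<not> card ?N \<le> Suc 0" using in1 in2 card_le_Suc0_iff_eq[OF finN] by blast
    moreover have "card ?N \<le> 1" using deg conn_dn[OF fin po A(1)] unfolding gamma_degree_def by blast
    ultimately show False by simp
  qed
qed


lemma crossing:
  assumes "(x, y) \<in> r\<^sup>*" "x \<in> S" "y \<notin> S"
  shows "\<exists>p q. (p, q) \<in> r \<and> p \<in> S \<and> q \<notin> S"
  using assms by (induction rule: rtrancl_induct) auto

lemma poset_conv: "is_poset A R \<Longrightarrow> is_poset A (\<lambda>x y. R y x)"
  unfolding is_poset_def by blast

lemma ex_max:
  assumes "finite S" "is_poset A R" "S \<subseteq> A" "x \<in> S"
  shows "\<exists>m\<in>S. R x m \<and> (\<forall>y\<in>S. R m y \<longrightarrow> y = m)"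
  using ex_min[OF assms(1) poset_conv[OF assms(2)] assms(3,4)] by blast

lemma max_partner:
  assumes po: "is_poset A R" and JA: "J \<subseteq> A" and m: "m1 \<in> J" "m2 \<in> J" "m1 \<noteq> m2"
    and mx: "\<forall>y\<in>J. R m1 y \<longrightarrow> y = m1" "\<forall>y\<in>J. R m2 y \<longrightarrow> y = m2"
    and p: "p \<in> A" "R p m1" "R p m2"
  shows "partner A R m1 m2"
  using m mx p unfolding partner_def by blast

lemma conn_struct:
  assumes fin: "finite A" and po: "is_poset A R" and mt: "matching A R"
    and J: "connected_order_ideal A R J"
  shows "(\<exists>m\<in>A. J = dn A R m) \<or> (\<exists>m1\<in>A. \<exists>m2\<in>A. partner A R m1 m2 \<and> J = dn A R m1 \<union> dn A R m2)"
proof -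
  have JA: "J \<subseteq> A" and low: "\<forall>y\<in>J. \<forall>x\<in>A. R x y \<longrightarrow> x \<in> J" and Jne: "J \<noteq> {}"
    and cn: "\<forall>x\<in>J. \<forall>y\<in>J. (x, y) \<in> (hasse_edges J R)\<^sup>*"
    using J unfolding connected_order_ideal_def order_ideal_def by auto
  have finJ: "finite J" using fin JA finite_subset by blast
  have dnJ: "dn A R m \<subseteq> J" if "m \<in> J" for m using low that unfolding dn_def by blast
  have edge: "p \<in> J \<and> q \<in> J \<and> (R p q \<or> R q p)" if "(p, q) \<in> hasse_edges J R" for p q
    using that unfolding hasse_edges_def covers_def by auto
  obtain j where j: "j \<in> J" using Jne by blast
  obtain m where m: "m \<in> J" "R j m" "\<forall>y\<in>J. R m y \<longrightarrow> y = m" using ex_max[OF finJ po JA j] by blast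
  have mA: "m \<in> A" using m JA by blast
  have mdn: "m \<in> dn A R m" using mA poset_refl[OF po mA] unfolding dn_def by blast
  show ?thesis
  proof (cases "J = dn A R m")
    case True then show ?thesis using mA by blast
  next
    case False
    then obtain y where y: "y \<in> J" "y \<notin> dn A R m" using dnJ[OF m(1)] by blast
    have "(m, y) \<in> (hasse_edges J R)\<^sup>*" using cn m(1) y(1) by blast
    from crossing[OF this mdn y(2)] obtain p q where
      pq: "(p, q) \<in> hasse_edges J R" "p \<in> dn A R m" "q \<notin> dn A R m" by blast
    have pqJ: "p \<in> J" "q \<in> J" "p \<in> A" "q \<in> A" using edge[OF pq(1)] JA by auto
    have Rpm: "R p m" using pq unfolding dn_def by blast
    have Rpq: "R p q"
    proof (rule ccontr)
      assume "\<not> R p q"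
      then have "R q p" using edge[OF pq(1)] by blast
      then have "R q m" using poset_trans[OF po pqJ(4) pqJ(3) mA] Rpm by blast
      then show False using pq(3) pqJ unfolding dn_def by blast
    qed
    obtain m' where m': "m' \<in> J" "R q m'" "\<forall>y\<in>J. R m' y \<longrightarrow> y = m'"
      using ex_max[OF finJ po JA pqJ(2)] by blast
    have m'A: "m' \<in> A" using m' JA by blast
    have "m' \<noteq> m" using m' pq(3) pqJ unfolding dn_def by blast
    have Rpm': "R p m'" using poset_trans[OF po pqJ(3) pqJ(4) m'A] Rpq m' by blast
    have pmm: "partner A R m m'"
      using max_partner[OF po JA m(1) m'(1) _ m(3) m'(3) pqJ(3) Rpm Rpm'] \<open>m' \<noteq> m\<close> by blast
    show ?thesis
    proof (cases "J = dn A R m \<union> dn A R m'")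
      case True then show ?thesis using mA m'A pmm by blast
    next
      case False
      then obtain y where y: "y \<in> J" "y \<notin> dn A R m \<union> dn A R m'" using dnJ[OF m(1)] dnJ[OF m'(1)] by blast
      have mdn': "m \<in> dn A R m \<union> dn A R m'" using mdn by blast
      have "(m, y) \<in> (hasse_edges J R)\<^sup>*" using cn m(1) y(1) by blast
      from crossing[OF this mdn' y(2)] obtain p q where
        pq: "(p, q) \<in> hasse_edges J R" "p \<in> dn A R m \<union> dn A R m'" "q \<notin> dn A R m \<union> dn A R m'" by blast
      have pqJ: "p \<in> J" "q \<in> J" "p \<in> A" "q \<in> A" using edge[OF pq(1)] JA by auto
      have Rpq: "R p q"
      proof (rule ccontr)
        assume "\<not> R p q"
        then have "R q p" using edge[OF pq(1)] by blast
        have "R p m \<or> R p m'" using pq(2) unfolding dn_def by blast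
        then have "R q m \<or> R q m'"
          using poset_trans[OF po pqJ(4) pqJ(3) mA] poset_trans[OF po pqJ(4) pqJ(3) m'A] \<open>R q p\<close> by blast
        then show False using pq(3) pqJ unfolding dn_def by blast
      qed
      obtain m'' where m'': "m'' \<in> J" "R q m''" "\<forall>y\<in>J. R m'' y \<longrightarrow> y = m''"
        using ex_max[OF finJ po JA pqJ(2)] by blast
      have m''A: "m'' \<in> A" using m'' JA by blast
      have ne1: "m'' \<noteq> m" "m'' \<noteq> m'" using m'' pq(3) pqJ unfolding dn_def by blast+
      have Rpm'': "R p m''" using poset_trans[OF po pqJ(3) pqJ(4) m''A] Rpq m'' by blast
      have "R p m \<or> R p m'" using pq(2) unfolding dn_def by blast
      then show ?thesis
      proof
        assume "R p m"
        then have "partner A R m m''"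
          using max_partner[OF po JA m(1) m''(1) _ m(3) m''(3) pqJ(3) _ Rpm''] ne1 by blast
        then have "m' = m''" using matchingD[OF mt mA m'A m''A pmm] by blast
        then show ?thesis using ne1 by blast
      next
        assume "R p m'"
        then have "partner A R m' m''"
          using max_partner[OF po JA m'(1) m''(1) _ m'(3) m''(3) pqJ(3) _ Rpm''] ne1 by blast
        then have "m = m''" using matchingD[OF mt m'A mA m''A partner_sym[OF pmm]] by blast
        then show ?thesis using ne1 by blast
      qed
    qed
  qed
qed

lemma L0:
  assumes po: "is_poset A R" and mt: "matching A R" and xy: "x \<in> A" "y \<in> A" "partner A R x y"
    and u: "u \<in> A" "u \<notin> dn A R x \<union> dn A R y" and w: "w \<in> A" "R w u" "R w x"
  shows "dn A R x \<union> dn A R y \<subseteq> dn A R u"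
proof -
  have nu: "\<not> R u x" "\<not> R u y" using u unfolding dn_def by auto
  show ?thesis
  proof (cases "R x u")
    case True
    show ?thesis
    proof (cases "R y u")
      case True
      show ?thesis
      proof
        fix v assume "v \<in> dn A R x \<union> dn A R y"
        then have v: "v \<in> A" "R v x \<or> R v y" unfolding dn_def by auto
        then have "R v u" using poset_trans[OF po v(1) xy(1) u(1)] poset_trans[OF po v(1) xy(2) u(1)]
          \<open>R x u\<close> \<open>R y u\<close> by blast
        then show "v \<in> dn A R u" using v unfolding dn_def by blast
      qed
    next
      case False
      obtain z where z: "z \<in> A" "R z x" "R z y" using xy unfolding partner_def by blast
      have "R z u" using poset_trans[OF po z(1) xy(1) u(1)] z \<open>R x u\<close> by blast
      then have "partner A R y u" using False nu z unfolding partner_def by blast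
      then have "u = x" using matchingD[OF mt xy(2) u(1) xy(1) _ partner_sym[OF xy(3)]] by blast
      then show ?thesis using nu poset_refl[OF po xy(1)] by blast
    qed
  next
    case False
    then have "partner A R x u" using nu w unfolding partner_def by blast
    then have "u = y" using matchingD[OF mt xy(1) u(1) xy(2) _ xy(3)] by blast
    then show ?thesis using nu poset_refl[OF po xy(2)] by blast
  qed
qed

lemma L1:
  assumes po: "is_poset A R" and mt: "matching A R" and xy: "x \<in> A" "y \<in> A" "partner A R x y"
    and u: "u \<in> A" "u \<notin> dn A R x \<union> dn A R y" and ne: "dn A R u \<inter> (dn A R x \<union> dn A R y) \<noteq> {}"
  shows "dn A R x \<union> dn A R y \<subseteq> dn A R u"
proof -
  obtain w where w: "w \<in> A" "R w u" "R w x \<or> R w y" using ne unfolding dn_def by blast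
  show ?thesis
  proof (cases "R w x")
    case True then show ?thesis using L0[OF po mt xy u w(1,2)] by blast
  next
    case False
    then have "R w y" using w by blast
    have "dn A R y \<union> dn A R x \<subseteq> dn A R u"
      using L0[OF po mt xy(2) xy(1) partner_sym[OF xy(3)] _ _ w(1,2) \<open>R w y\<close>] u by blast
    then show ?thesis by blast
  qed
qed

lemma pair_lower: "is_poset A R \<Longrightarrow> x \<in> A \<Longrightarrow> y \<in> A \<Longrightarrow> u \<in> dn A R x \<union> dn A R y \<Longrightarrow>
   dn A R u \<subseteq> dn A R x \<union> dn A R y"
proof
  fix w assume po: "is_poset A R" and xy: "x \<in> A" "y \<in> A" and u: "u \<in> dn A R x \<union> dn A R y"
    and w: "w \<in> dn A R u"
  have uA: "u \<in> A" "R u x \<or> R u y" using u unfolding dn_def by auto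
  have wA: "w \<in> A" "R w u" using w unfolding dn_def by auto
  have "R w x \<or> R w y" using poset_trans[OF po wA(1) uA(1) xy(1)] poset_trans[OF po wA(1) uA(1) xy(2)] uA wA by blast
  then show "w \<in> dn A R x \<union> dn A R y" using wA unfolding dn_def by blast
qed

lemma pair_pair:
  assumes po: "is_poset A R" and mt: "matching A R" and xy: "x \<in> A" "y \<in> A" "partner A R x y"
    and uv: "u \<in> A" "v \<in> A" "partner A R u v" and un: "u \<notin> dn A R x \<union> dn A R y"
    and nt: "intersect_nontrivially (dn A R x \<union> dn A R y) (dn A R u \<union> dn A R v)"
  shows False
proof -
  let ?J = "dn A R x \<union> dn A R y"
  let ?K = "dn A R u \<union> dn A R v"
  have d1: "dn A R u \<inter> ?J = {}"
  proof (rule ccontr)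
    assume "dn A R u \<inter> ?J \<noteq> {}"
    then have "?J \<subseteq> dn A R u" using L1[OF po mt xy uv(1) un] by blast
    then show False using nt unfolding intersect_nontrivially_def by blast
  qed
  then have "dn A R v \<inter> ?J \<noteq> {}" using nt unfolding intersect_nontrivially_def by blast
  moreover have "v \<notin> ?J"
  proof
    assume "v \<in> ?J"
    then have s: "dn A R v \<subseteq> ?J" using pair_lower[OF po xy(1,2)] by blast
    obtain w where "w \<in> A" "R w u" "R w v" using uv unfolding partner_def by blast
    then have "w \<in> dn A R u" "w \<in> dn A R v" unfolding dn_def by auto
    then show False using s d1 by blast
  qed
  ultimately have "?J \<subseteq> dn A R v" using L1[OF po mt xy uv(2)] by blast
  then show False using nt unfolding intersect_nontrivially_def by blast
qed

lemma pair_no_nb: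
  assumes fin: "finite A" and po: "is_poset A R" and mt: "matching A R"
    and xy: "x \<in> A" "y \<in> A" "partner A R x y"
    and K: "connected_order_ideal A R K"
    and nt: "intersect_nontrivially (dn A R x \<union> dn A R y) K"
  shows False
proof -
  let ?J = "dn A R x \<union> dn A R y"
  from conn_struct[OF fin po mt K] show False
  proof
    assume "\<exists>m\<in>A. K = dn A R m"
    then obtain u where u: "u \<in> A" "K = dn A R u" by blast
    show False
    proof (cases "u \<in> ?J")
      case True
      then show False using pair_lower[OF po xy(1,2) True] nt u unfolding intersect_nontrivially_def by blast
    next
      case False
      then have "?J \<subseteq> K" using L1[OF po mt xy u(1) False] nt u unfolding intersect_nontrivially_def by blast
      then show False using nt unfolding intersect_nontrivially_def by blast
    qed
  next
    assume "\<exists>m1\<in>A. \<exists>m2\<in>A. partner A R m1 m2 \<and> K = dn A R m1 \<union> dn A R m2"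
    then obtain u v where uv: "u \<in> A" "v \<in> A" "partner A R u v" "K = dn A R u \<union> dn A R v" by blast
    show False
    proof (cases "u \<in> ?J \<and> v \<in> ?J")
      case True
      then have "K \<subseteq> ?J" using pair_lower[OF po xy(1,2)] uv(4) by blast
      then show False using nt unfolding intersect_nontrivially_def by blast
    next
      case False
      then have "u \<notin> ?J \<or> v \<notin> ?J" by blast
      then show False
      proof
        assume "u \<notin> ?J" then show False using pair_pair[OF po mt xy uv(1-3)] nt uv(4) by blast
      next
        assume "v \<notin> ?J" then show False
          using pair_pair[OF po mt xy uv(2) uv(1) partner_sym[OF uv(3)]] nt uv(4) by (simp add: Un_commute)
      qed
    qed
  qed
qed

lemma nt_sym: "intersect_nontrivially J K \<Longrightarrow> intersect_nontrivially K J"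
  unfolding intersect_nontrivially_def by blast

lemma matching_deg:
  assumes fin: "finite A" and po: "is_poset A R" and mt: "matching A R"
    and J: "connected_order_ideal A R J"
  shows "gamma_degree A R J \<le> 1"
proof -
  let ?N = "{J'. connected_order_ideal A R J' \<and> intersect_nontrivially J J'}"
  have finN: "finite ?N"
  proof (rule finite_subset[of _ "Pow A"])
    show "?N \<subseteq> Pow A" unfolding connected_order_ideal_def order_ideal_def by blast
  qed (use fin in simp)
  have "\<forall>K1\<in>?N. \<forall>K2\<in>?N. K1 = K2"
  proof (intro ballI)
    fix K1 K2 assume K1: "K1 \<in> ?N" and K2: "K2 \<in> ?N"
    from conn_struct[OF fin po mt J] show "K1 = K2"
    proof
      assume "\<exists>m1\<in>A. \<exists>m2\<in>A. partner A R m1 m2 \<and> J = dn A R m1 \<union> dn A R m2"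
      then obtain x y where "x \<in> A" "y \<in> A" "partner A R x y" "J = dn A R x \<union> dn A R y" by blast
      then show ?thesis using pair_no_nb[OF fin po mt, of x y K1] K1 by blast
    next
      assume "\<exists>m\<in>A. J = dn A R m"
      then obtain x where x: "x \<in> A" "J = dn A R x" by blast
      have nb: "\<exists>u\<in>A. partner A R x u \<and> K = dn A R u" if K: "K \<in> ?N" for K
      proof -
        have Kc: "connected_order_ideal A R K" and Knt: "intersect_nontrivially J K" using K by auto
        from conn_struct[OF fin po mt Kc] show ?thesis
        proof
          assume "\<exists>m1\<in>A. \<exists>m2\<in>A. partner A R m1 m2 \<and> K = dn A R m1 \<union> dn A R m2"
          then obtain u v where "u \<in> A" "v \<in> A" "partner A R u v" "K = dn A R u \<union> dn A R v" by blast
          then show ?thesis using pair_no_nb[OF fin po mt, of u v J] nt_sym[OF Knt] J by blast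
        next
          assume "\<exists>m\<in>A. K = dn A R m"
          then obtain u where u: "u \<in> A" "K = dn A R u" by blast
          have "x \<in> dn A R x" "u \<in> dn A R u" using x u poset_refl[OF po x(1)] poset_refl[OF po u(1)]
            unfolding dn_def by auto
          have "\<not> R x u"
          proof
            assume "R x u"
            then have "x \<in> dn A R u \<union> dn A R u" using x(1) unfolding dn_def by blast
            then have "J \<subseteq> K" using pair_lower[OF po u(1) u(1)] x u by blast
            then show False using Knt unfolding intersect_nontrivially_def by blast
          qed
          moreover have "\<not> R u x"
          proof
            assume "R u x"
            then have "u \<in> dn A R x \<union> dn A R x" using u(1) unfolding dn_def by blast
            then have "K \<subseteq> J" using pair_lower[OF po x(1) x(1)] x u by blast
            then show False using Knt unfolding intersect_nontrivially_def by blast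
          qed
          moreover obtain z where "z \<in> dn A R x" "z \<in> dn A R u" using Knt x u
            unfolding intersect_nontrivially_def by blast
          ultimately have "partner A R x u" unfolding partner_def dn_def by blast
          then show ?thesis using u by blast
        qed
      qed
      obtain u1 where u1: "u1 \<in> A" "partner A R x u1" "K1 = dn A R u1" using nb[OF K1] by blast
      obtain u2 where u2: "u2 \<in> A" "partner A R x u2" "K2 = dn A R u2" using nb[OF K2] by blast
      have "u1 = u2" using matchingD[OF mt x(1) u1(1) u2(1) u1(2) u2(2)] .
      then show ?thesis using u1 u2 by simp
    qed
  qed
  then have "card ?N \<le> Suc 0" using card_le_Suc0_iff_eq[OF finN] by blast
  then show ?thesis unfolding gamma_degree_def by simp
qed

lemma union_partner:
  assumes "A \<inter> B = {}" "x \<in> A \<union> B" "y \<in> A \<union> B"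
    "partner (A \<union> B) (disj_union_rel A R B S) x y"
  shows "(x \<in> A \<and> y \<in> A \<and> partner A R x y) \<or> (x \<in> B \<and> y \<in> B \<and> partner B S x y)"
proof -
  from assms(4) obtain z where z: "z \<in> A \<union> B" "disj_union_rel A R B S z x" "disj_union_rel A R B S z y"
    "\<not> disj_union_rel A R B S x y" "\<not> disj_union_rel A R B S y x" unfolding partner_def by blast
  show ?thesis
  proof (cases "z \<in> A")
    case True
    then have "x \<in> A" "y \<in> A" "R z x" "R z y" using z assms(1) unfolding disj_union_rel_def by auto
    then show ?thesis using z True unfolding disj_union_rel_def partner_def by auto
  next
    case False
    then have "z \<in> B" "x \<in> B" "y \<in> B" "S z x" "S z y" using z assms(1) unfolding disj_union_rel_def by auto
    then show ?thesis using z unfolding disj_union_rel_def partner_def by auto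
  qed
qed

lemma hang_partner:
  assumes "A \<inter> B = {}" "x \<in> A \<union> B" "y \<in> A \<union> B" "a \<in> A"
    "partner (A \<union> B) (hang_rel A R a B S) x y"
  shows "(x \<in> A \<and> y \<in> A \<and> partner A R x y) \<or> (x \<in> B \<and> y \<in> B \<and> partner B S x y)"
proof -
  let ?H = "hang_rel A R a B S"
  from assms(5) obtain z where z: "z \<in> A \<union> B" "?H z x" "?H z y"
    "\<not> ?H x y" "\<not> ?H y x" unfolding partner_def by blast
  have D: "\<And>u v. u \<in> A \<Longrightarrow> v \<in> A \<Longrightarrow> ?H u v = R u v"
       "\<And>u v. u \<in> B \<Longrightarrow> v \<in> B \<Longrightarrow> ?H u v = S u v"
       "\<And>u v. u \<in> B \<Longrightarrow> v \<in> A \<Longrightarrow> ?H u v = R a v"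
       "\<And>u v. u \<in> A \<Longrightarrow> v \<in> B \<Longrightarrow> ?H u v = False"
    using assms(1) unfolding hang_rel_def disj_union_rel_def by auto
  consider "x \<in> A" "y \<in> A" | "x \<in> B" "y \<in> B" | "x \<in> A" "y \<in> B" | "x \<in> B" "y \<in> A"
    using assms(2,3) by blast
  then show ?thesis
  proof cases
    case 1
    have "\<exists>w\<in>A. R w x \<and> R w y"
    proof (cases "z \<in> A")
      case True then show ?thesis using z D 1 by auto
    next
      case False then have "z \<in> B" using z by auto
      then show ?thesis using z D 1 assms(4) by auto
    qed
    then show ?thesis using 1 z D unfolding partner_def by auto
  next
    case 2
    have "z \<in> B" using z D 2 by (cases "z \<in> A") auto
    then show ?thesis using 2 z D unfolding partner_def by auto
  next
    case 3
    have "z \<in> B" using z D 3 by (cases "z \<in> A") auto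
    then show ?thesis using 3 z D by auto
  next
    case 4
    have "z \<in> B" using z D 4 by (cases "z \<in> A") auto
    then show ?thesis using 4 z D by auto
  qed
qed

lemma dup_partner:
  assumes "A \<inter> B = {}" "x \<in> insert a' (A \<union> B)" "y \<in> insert a' (A \<union> B)" "a \<in> A"
    "a' \<notin> A" "a' \<notin> B"
    "partner (insert a' (A \<union> B)) (dup_rel A R a B S a') x y"
  shows "(x \<in> A \<and> y \<in> A \<and> partner A R x y) \<or> (x \<in> B \<and> y \<in> B \<and> partner B S x y)
     \<or> (x = a \<and> y = a') \<or> (x = a' \<and> y = a)"
proof -
  let ?H = "dup_rel A R a B S a'"
  from assms(7) obtain z where z: "z \<in> insert a' (A \<union> B)" "?H z x" "?H z y"
    "\<not> ?H x y" "\<not> ?H y x" unfolding partner_def by blast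
  have D: "\<And>u v. u \<in> A \<Longrightarrow> v \<in> A \<Longrightarrow> ?H u v = R u v"
       "\<And>u v. u \<in> B \<Longrightarrow> v \<in> B \<Longrightarrow> ?H u v = S u v"
       "\<And>u v. u \<in> B \<Longrightarrow> v \<in> A \<Longrightarrow> ?H u v = R a v"
       "\<And>u v. u \<in> A \<Longrightarrow> v \<in> B \<Longrightarrow> ?H u v = False"
       "\<And>u. u \<in> A \<Longrightarrow> ?H u a' = False"
       "\<And>u. u \<in> B \<Longrightarrow> ?H u a' = True"
       "\<And>u. u \<in> B \<Longrightarrow> ?H a' u = False"
       "\<And>u. u \<in> A \<Longrightarrow> ?H a' u = (u \<noteq> a \<and> R a u)"
       "?H a' a' = True"
    using assms(1,5,6) unfolding dup_rel_def hang_rel_def disj_union_rel_def by auto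
  consider "x \<in> A" "y \<in> A" | "x \<in> B" "y \<in> B" | "x \<in> A" "y \<in> B" | "x \<in> B" "y \<in> A"
    | "x = a'" "y \<in> A" | "x \<in> A" "y = a'" | "x = a'" "y \<in> B" | "x \<in> B" "y = a'" | "x = a'" "y = a'"
    using assms(2,3) by blast
  then show ?thesis
  proof cases
    case 1
    have "\<exists>w\<in>A. R w x \<and> R w y"
    proof (cases "z \<in> A")
      case True then show ?thesis using z D 1 by auto
    next
      case False then have "z \<in> B \<or> z = a'" using z by auto
      then show ?thesis using z D 1 assms(4) by auto
    qed
    then show ?thesis using 1 z D unfolding partner_def by auto
  next
    case 2
    have "z \<in> B" using z D 2 by (cases "z \<in> A"; cases "z = a'") auto
    then show ?thesis using 2 z D unfolding partner_def by auto
  next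
    case 3
    have "z \<in> B" using z D 3 by (cases "z \<in> A"; cases "z = a'") auto
    then show ?thesis using 3 z D by auto
  next
    case 4
    have "z \<in> B" using z D 4 by (cases "z \<in> A"; cases "z = a'") auto
    then show ?thesis using 4 z D by auto
  next
    case 5
    have "z \<in> B \<or> z = a'" using z D 5 by (cases "z \<in> A") auto
    then show ?thesis using 5 z D by auto
  next
    case 6
    have "z \<in> B \<or> z = a'" using z D 6 by (cases "z \<in> A") auto
    then show ?thesis using 6 z D by auto
  next
    case 7 then show ?thesis using z D by auto
  next
    case 8 then show ?thesis using z D by auto
  next
    case 9 then show ?thesis using z D by auto
  qed
qed

lemma forest_dup_matching: "forest_dup A R \<Longrightarrow> matching A R"
proof (induction rule: forest_dup.induct)
  case (single x)
  then show ?case unfolding matching_def partner_def by auto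
next
  case (iso A R f B S)
  have eq: "partner B S (f x) (f y) \<longleftrightarrow> partner A R x y" if "x \<in> A" "y \<in> A" for x y
  proof -
    have "(\<exists>z\<in>B. S z (f x) \<and> S z (f y)) \<longleftrightarrow> (\<exists>z\<in>A. R z x \<and> R z y)"
      using iso.hyps(2) iso.hyps(3) that unfolding bij_betw_def by auto
    then show ?thesis unfolding partner_def using iso.hyps(3) that by auto
  qed
  show ?case unfolding matching_def
  proof (intro ballI impI)
    fix x y y' assume "x \<in> B" "y \<in> B" "y' \<in> B" "partner B S x y \<and> partner B S x y'"
    then obtain x0 y0 y0' where "x0 \<in> A" "y0 \<in> A" "y0' \<in> A" "x = f x0" "y = f y0" "y' = f y0'"
      using iso.hyps(2) unfolding bij_betw_def by auto
    then show "y = y'" using iso.IH eq \<open>partner B S x y \<and> partner B S x y'\<close>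
      unfolding matching_def by metis
  qed
next
  case (union A R B S)
  show ?case unfolding matching_def
  proof (intro ballI impI)
    fix x y y' assume h: "x \<in> A \<union> B" "y \<in> A \<union> B" "y' \<in> A \<union> B"
      "partner (A \<union> B) (disj_union_rel A R B S) x y \<and> partner (A \<union> B) (disj_union_rel A R B S) x y'"
    then have "(x \<in> A \<and> y \<in> A \<and> partner A R x y) \<or> (x \<in> B \<and> y \<in> B \<and> partner B S x y)"
      "(x \<in> A \<and> y' \<in> A \<and> partner A R x y') \<or> (x \<in> B \<and> y' \<in> B \<and> partner B S x y')"
      using union_partner[OF union.hyps(3)] by blast+
    then show "y = y'" using union.IH union.hyps(3) unfolding matching_def by blast
  qed
next
  case (hang A R B S a)
  show ?case unfolding matching_def
  proof (intro ballI impI)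
    fix x y y' assume h: "x \<in> A \<union> B" "y \<in> A \<union> B" "y' \<in> A \<union> B"
      "partner (A \<union> B) (hang_rel A R a B S) x y \<and> partner (A \<union> B) (hang_rel A R a B S) x y'"
    then have "(x \<in> A \<and> y \<in> A \<and> partner A R x y) \<or> (x \<in> B \<and> y \<in> B \<and> partner B S x y)"
      "(x \<in> A \<and> y' \<in> A \<and> partner A R x y') \<or> (x \<in> B \<and> y' \<in> B \<and> partner B S x y')"
      using hang_partner[OF hang.hyps(3) _ _ hang.hyps(4)] by blast+
    then show "y = y'" using hang.IH hang.hyps(3) unfolding matching_def by blast
  qed
next
  case (dup A R B S a a')
  have noa: "\<not> partner A R a y" for y
    using dup.hyps(5) unfolding partner_def by blast
  show ?case unfolding matching_def
  proof (intro ballI impI)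
    fix x y y' assume h: "x \<in> insert a' (A \<union> B)" "y \<in> insert a' (A \<union> B)" "y' \<in> insert a' (A \<union> B)"
      "partner (insert a' (A \<union> B)) (dup_rel A R a B S a') x y \<and> partner (insert a' (A \<union> B)) (dup_rel A R a B S a') x y'"
    then have "(x \<in> A \<and> y \<in> A \<and> partner A R x y) \<or> (x \<in> B \<and> y \<in> B \<and> partner B S x y)
     \<or> (x = a \<and> y = a') \<or> (x = a' \<and> y = a)"
      "(x \<in> A \<and> y' \<in> A \<and> partner A R x y') \<or> (x \<in> B \<and> y' \<in> B \<and> partner B S x y')
     \<or> (x = a \<and> y' = a') \<or> (x = a' \<and> y' = a)"
      using dup_partner[OF dup.hyps(3) _ _ dup.hyps(4) dup.hyps(6,7)] by blast+
    note H = this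
    show "y = y'"
    proof (cases "x = a")
      case True
      then have "x \<notin> B" "x \<noteq> a'" using dup.hyps(3,4,6) by auto
      then show ?thesis using H True noa by blast
    next
      case F1: False
      show ?thesis
      proof (cases "x = a'")
        case True
        then have "x \<notin> B" "x \<notin> A" using dup.hyps(6,7) by auto
        then show ?thesis using H True by blast
      next
        case False
        then have "(x \<in> A \<and> y \<in> A \<and> partner A R x y) \<or> (x \<in> B \<and> y \<in> B \<and> partner B S x y)"
          "(x \<in> A \<and> y' \<in> A \<and> partner A R x y') \<or> (x \<in> B \<and> y' \<in> B \<and> partner B S x y')"
          using H F1 by blast+
        then show ?thesis using dup.IH dup.hyps(3) unfolding matching_def by blast
      qed
    qed
  qed
qed

lemma dup_table:
  assumes "A \<inter> B = {}" "a' \<notin> A" "a' \<notin> B"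
  shows "\<And>u v. u \<in> A \<Longrightarrow> v \<in> A \<Longrightarrow> dup_rel A R a B S a' u v = R u v"
       "\<And>u v. u \<in> B \<Longrightarrow> v \<in> B \<Longrightarrow> dup_rel A R a B S a' u v = S u v"
       "\<And>u v. u \<in> B \<Longrightarrow> v \<in> A \<Longrightarrow> dup_rel A R a B S a' u v = R a v"
       "\<And>u v. u \<in> A \<Longrightarrow> v \<in> B \<Longrightarrow> dup_rel A R a B S a' u v = False"
       "\<And>u. u \<in> A \<Longrightarrow> dup_rel A R a B S a' u a' = False"
       "\<And>u. u \<in> B \<Longrightarrow> dup_rel A R a B S a' u a' = True"
       "\<And>u. u \<in> B \<Longrightarrow> dup_rel A R a B S a' a' u = False"
       "\<And>u. u \<in> A \<Longrightarrow> dup_rel A R a B S a' a' u = (u \<noteq> a \<and> R a u)"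
       "dup_rel A R a B S a' a' a' = True"
  using assms unfolding dup_rel_def hang_rel_def disj_union_rel_def by auto

lemma match_forest:
  "finite A \<Longrightarrow> A \<noteq> {} \<Longrightarrow> is_poset A R \<Longrightarrow> matching A R \<Longrightarrow> forest_dup A R"
proof (induction "card A" arbitrary: A rule: less_induct)
  case less
  note fin = less.prems(1) and ne = less.prems(2) and po = less.prems(3) and mt = less.prems(4)
  have IH: "forest_dup S R" if "S \<subset> A" "S \<noteq> {}" for S
  proof -
    have "card S < card A" using psubset_card_mono[OF fin that(1)] .
    moreover have "finite S" using that(1) fin finite_subset by blast
    ultimately show ?thesis using less.hyps that po mt poset_sub matching_sub
      by (metis psubset_imp_subset)
  qed
  show ?case
  proof (cases "\<exists>z\<in>A. (\<forall>y\<in>A. R y z \<longrightarrow> y = z) \<and>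
         (sup_set A R z = {} \<or> (\<exists>a\<in>sup_set A R z. \<forall>y\<in>sup_set A R z. R a y))")
    case True
    then obtain z where z: "z \<in> A" "\<forall>y\<in>A. R y z \<longrightarrow> y = z"
      and zc: "sup_set A R z = {} \<or> (\<exists>a\<in>sup_set A R z. \<forall>y\<in>sup_set A R z. R a y)" by blast
    let ?A' = "A - {z}"
    have Aeq: "A = ?A' \<union> {z}" using z by blast
    have fz: "forest_dup {z} (\<lambda>u v. u = v)" by (rule forest_dup.single)
    from zc show ?thesis
    proof
      assume U: "sup_set A R z = {}"
      show ?thesis
      proof (cases "?A' = {}")
        case True
        then have "A = {z}" using z by blast
        then show ?thesis using fd_cong[OF fz] poset_refl[OF po z(1)] by simp
      next
        case False
        have f1: "forest_dup ?A' R" using IH[OF _ False] z by blast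
        have "forest_dup (?A' \<union> {z}) (disj_union_rel ?A' R {z} (\<lambda>u v. u = v))"
          by (rule forest_dup.union[OF f1 fz]) blast
        moreover have "\<forall>x\<in>A. \<forall>y\<in>A. disj_union_rel ?A' R {z} (\<lambda>u v. u = v) x y \<longleftrightarrow> R x y"
        proof (intro ballI)
          fix x y assume xy: "x \<in> A" "y \<in> A"
          have "\<not> R z y" if "y \<noteq> z" using U xy that unfolding sup_set_def by blast
          moreover have "\<not> R x z" if "x \<noteq> z" using z xy that by blast
          ultimately show "disj_union_rel ?A' R {z} (\<lambda>u v. u = v) x y \<longleftrightarrow> R x y"
            using xy poset_refl[OF po z(1)] unfolding disj_union_rel_def by auto
        qed
        ultimately show ?thesis using fd_cong Aeq by metis
      qed
    next
      assume "\<exists>a\<in>sup_set A R z. \<forall>y\<in>sup_set A R z. R a y"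
      then obtain a where a: "a \<in> sup_set A R z" "\<forall>y\<in>sup_set A R z. R a y" by blast
      have aA: "a \<in> A" "R z a" "a \<noteq> z" using a unfolding sup_set_def by auto
      then have aA': "a \<in> ?A'" by blast
      then have ne': "?A' \<noteq> {}" by blast
      have f1: "forest_dup ?A' R" using IH[OF _ ne'] z by blast
      have "forest_dup (?A' \<union> {z}) (hang_rel ?A' R a {z} (\<lambda>u v. u = v))"
        by (rule forest_dup.hang[OF f1 fz _ aA']) blast
      moreover have "\<forall>x\<in>A. \<forall>y\<in>A. hang_rel ?A' R a {z} (\<lambda>u v. u = v) x y \<longleftrightarrow> R x y"
      proof (intro ballI)
        fix x y assume xy: "x \<in> A" "y \<in> A"
        have zy: "R z y \<longleftrightarrow> R a y" if "y \<noteq> z"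
        proof
          assume "R z y" then show "R a y" using a(2) xy that unfolding sup_set_def by blast
        next
          assume "R a y" then show "R z y" using poset_trans[OF po z(1) aA(1) xy(2)] aA by blast
        qed
        have "\<not> R x z" if "x \<noteq> z" using z xy that by blast
        then show "hang_rel ?A' R a {z} (\<lambda>u v. u = v) x y \<longleftrightarrow> R x y"
          using xy zy poset_refl[OF po z(1)] unfolding hang_rel_def disj_union_rel_def by auto
      qed
      ultimately show ?thesis using fd_cong Aeq by metis
    qed
  next
    case False
    then have caseB: "\<forall>z\<in>A. (\<forall>y\<in>A. R y z \<longrightarrow> y = z) \<longrightarrow>
        \<not> (\<exists>a\<in>sup_set A R z. \<forall>y\<in>sup_set A R z. R a y)"
      and caseB2: "\<forall>z\<in>A. (\<forall>y\<in>A. R y z \<longrightarrow> y = z) \<longrightarrow> sup_set A R z \<noteq> {}" by blast+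
    have subU: "sup_set A R w \<subseteq> A" for w unfolding sup_set_def by blast
    have finU: "finite (sup_set A R w)" for w using fin unfolding sup_set_def by simp
    obtain x0 where x0: "x0 \<in> A" using ne by blast
    obtain z where z: "z \<in> A" "\<forall>y\<in>A. R y z \<longrightarrow> y = z"
      using ex_min[OF fin po _ x0] by blast
    obtain y0 where y0: "y0 \<in> sup_set A R z" using caseB2 z by blast
    obtain p1 where p1: "p1 \<in> sup_set A R z" "\<forall>y\<in>sup_set A R z. R y p1 \<longrightarrow> y = p1"
      using ex_min[OF finU po subU y0] by blast
    obtain p2 where p2: "p2 \<in> sup_set A R z" "partner A R p1 p2"
      using no_least_partner[OF fin po z(1) p1(1) p1(2)] caseB z by blast
    let ?P = "\<lambda>p. fst p \<in> A \<and> snd p \<in> A \<and> partner A R (fst p) (snd p)"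
    let ?f = "\<lambda>p. card (sdn A R (fst p) \<union> sdn A R (snd p))"
    have "?P (p1, p2)" using p1 p2 subU by auto
    from ex_has_least_nat[of ?P _ ?f, OF this] obtain pp where pp: "?P pp" "\<forall>q. ?P q \<longrightarrow> ?f pp \<le> ?f q"
      by blast
    define a1 where "a1 = fst pp"
    define a2 where "a2 = snd pp"
    have a: "a1 \<in> A" "a2 \<in> A" "partner A R a1 a2" using pp(1) a1_def a2_def by auto
    have a': "partner A R a2 a1" using partner_sym[OF a(3)] .
    have mini: "\<forall>b1\<in>A. \<forall>b2\<in>A. partner A R b1 b2 \<longrightarrow>
        card (sdn A R a1 \<union> sdn A R a2) \<le> card (sdn A R b1 \<union> sdn A R b2)"
    proof (intro ballI impI)
      fix b1 b2 assume "b1 \<in> A" "b2 \<in> A" "partner A R b1 b2"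
      then show "card (sdn A R a1 \<union> sdn A R a2) \<le> card (sdn A R b1 \<union> sdn A R b2)"
        using pp(2)[rule_format, of "(b1, b2)"] a1_def a2_def by auto
    qed
    have mini': "\<forall>b1\<in>A. \<forall>b2\<in>A. partner A R b1 b2 \<longrightarrow>
        card (sdn A R a2 \<union> sdn A R a1) \<le> card (sdn A R b1 \<union> sdn A R b2)"
      using mini by (simp add: Un_commute)
    have D12: "sdn A R a1 = sdn A R a2"
      using T1_lemma[OF fin po mt caseB a mini] T1_lemma[OF fin po mt caseB a(2) a(1) a' mini'] by blast
    define B where "B = sdn A R a1"
    define Q where "Q = A - B - {a2}"
    have na: "\<not> R a1 a2" "\<not> R a2 a1" using a(3) unfolding partner_def by auto
    have a1Q: "a1 \<in> Q" using na a poset_refl[OF po a(2)] unfolding Q_def B_def sdn_def by auto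
    have a2B: "a2 \<notin> B" "a2 \<notin> Q" using na unfolding Q_def B_def sdn_def by auto
    have QB: "Q \<inter> B = {}" unfolding Q_def by blast
    have Aeq: "A = insert a2 (Q \<union> B)" using a unfolding Q_def B_def sdn_def by blast
    have Bne: "B \<noteq> {}"
    proof -
      obtain w where w: "w \<in> A" "R w a1" "R w a2" using a(3) unfolding partner_def by blast
      have "w \<noteq> a1" using w na by blast
      then show ?thesis using w unfolding B_def sdn_def by blast
    qed
    have BA: "B \<subset> A" using a1Q unfolding Q_def B_def sdn_def by blast
    have QA: "Q \<subset> A" using a unfolding Q_def by blast
    have fQ: "forest_dup Q R" using IH[OF QA] a1Q by blast
    have fB: "forest_dup B R" using IH[OF BA Bne] .
    have a1min: "\<forall>y\<in>Q. R y a1 \<longrightarrow> y = a1" unfolding Q_def B_def sdn_def by blast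
    have "forest_dup (insert a2 (Q \<union> B)) (dup_rel Q R a1 B R a2)"
      by (rule forest_dup.dup[OF fQ fB QB a1Q a1min a2B(2) a2B(1)])
    moreover have "\<forall>x\<in>A. \<forall>y\<in>A. dup_rel Q R a1 B R a2 x y \<longleftrightarrow> R x y"
    proof (intro ballI)
      fix x y assume xy: "x \<in> A" "y \<in> A"
      note T = dup_table[OF QB a2B(2) a2B(1), where R=R and a=a1 and S=R]
      have QA': "Q \<subseteq> A" "B \<subseteq> A" using QA BA by auto
      consider "x \<in> Q" "y \<in> Q" | "x \<in> B" "y \<in> B" | "x \<in> B" "y \<in> Q" | "x \<in> Q" "y \<in> B"
        | "x = a2" "y \<in> Q" | "x \<in> Q" "y = a2" | "x = a2" "y \<in> B" | "x \<in> B" "y = a2" | "x = a2" "y = a2"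
        using xy Aeq by blast
      then show "dup_rel Q R a1 B R a2 x y \<longleftrightarrow> R x y"
      proof cases
        case 1 then show ?thesis using T by simp
      next
        case 2 then show ?thesis using T by simp
      next
        case 3
        have "R a1 y \<longleftrightarrow> R x y"
        proof
          assume "R a1 y" then show "R x y"
            using 3 poset_trans[OF po _ a(1) xy(2), of x] QA' unfolding B_def sdn_def by blast
        next
          assume "R x y" then show "R a1 y"
            using T3_lemma[OF po mt a, of x y] 3 xy unfolding Q_def B_def by blast
        qed
        then show ?thesis using T 3 by simp
      next
        case 4
        have "\<not> R x y"
        proof
          assume r: "R x y"
          have yb: "y \<in> A" "R y a1" "y \<noteq> a1" using 4 unfolding B_def sdn_def by auto
          have "R x a1" using poset_trans[OF po xy(1) yb(1) a(1)] r yb by blast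
          moreover have "x \<noteq> a1" using poset_antisym[OF po yb(1) a(1)] r yb by blast
          ultimately show False using 4 xy unfolding Q_def B_def sdn_def by blast
        qed
        then show ?thesis using T 4 by simp
      next
        case 5
        have "(y \<noteq> a1 \<and> R a1 y) \<longleftrightarrow> R a2 y"
        proof
          assume "y \<noteq> a1 \<and> R a1 y" then show "R a2 y" using T2_lemma[OF po mt a xy(2)] by blast
        next
          assume r: "R a2 y"
          have "y \<noteq> a2" using 5 a2B by blast
          then have "R a1 y" using T2_lemma[OF po mt a(2) a(1) a' xy(2) r] by blast
          moreover have "y \<noteq> a1" using r na by blast
          ultimately show "y \<noteq> a1 \<and> R a1 y" by blast
        qed
        then show ?thesis using T 5 by simp
      next
        case 6
        have "\<not> R x y"
        proof
          assume "R x y"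
          then have "x \<in> sdn A R a2" using 6 xy a2B unfolding sdn_def by blast
          then show False using 6 D12 unfolding Q_def B_def by blast
        qed
        then show ?thesis using T 6 by simp
      next
        case 7
        have "\<not> R x y"
        proof
          assume r: "R x y"
          have yb: "y \<in> A" "R y a1" using 7 unfolding B_def sdn_def by auto
          have "R a2 a1" using poset_trans[OF po a(2) yb(1) a(1)] r yb 7 by blast
          then show False using na by blast
        qed
        then show ?thesis using T 7 by simp
      next
        case 8
        have "R x y" using 8 D12 unfolding B_def sdn_def by blast
        then show ?thesis using T 8 by simp
      next
        case 9 then show ?thesis using T poset_refl[OF po a(2)] by simp
      qed
    qed
    ultimately show ?thesis using fd_cong Aeq by metis
  qed
qed


theorem proposition2p3:
  fixes A :: "'a set" and R :: "'a \<Rightarrow> 'a \<Rightarrow> bool"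
  assumes "finite A" and "A \<noteq> {}" and "is_poset A R"
  shows "forest_dup A R \<longleftrightarrow>
         (\<forall>J. connected_order_ideal A R J \<longrightarrow> gamma_degree A R J \<le> 1)"
proof -
  have "forest_dup A R \<longleftrightarrow> matching A R"
    using forest_dup_matching match_forest assms by blast
  moreover have "matching A R \<longleftrightarrow> (\<forall>J. connected_order_ideal A R J \<longrightarrow> gamma_degree A R J \<le> 1)"
    using deg_matching matching_deg assms by blast
  ultimately show ?thesis by simp
qed

end
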